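(* Let $n>1$ and let $s=(x_1,\dots,x_n)\in\mathbb{T}_n$ be a unit (i.e. $x_1\neq0$). Writing $(s^{-1})_p$ for the $p$-th component of $s^{-1}$ in $n$-vector format, for every $k\le n$ and every $j<k$, $$\frac{\partial (s^{-1})_k}{\partial x_j}=\frac{\partial (s^{-1})_{k-j+1}}{\partial x_1}.$$
   Context: $\mathbb{T}_n$ is the $n$-dimensional real algebra of upper triangular Toeplitz $n\times n$ matrices under matrix multiplication. An element $s=(x_1,\dots,x_n)\in\mathbb{T}_n$ denotes the upper triangular Toeplitz matrix whose entries on the successive diagonals, starting with the main diagonal and proceeding to the right, are $x_1,\dots,x_n$; equivalently $s=x_1\mathbf{1}+x_2\mathbf{z}+\dots+x_n\mathbf{z}^{n-1}$ where $\mathbf{z}$ has ones on the superdiagonal and zeros elsewhere. The inverse $s^{-1}$ is again in $\mathbb{T}_n$ and is written in the same vector format. *)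

theory Defs
  imports Complex_Main
begin

text \<open>An element s = (x_1,...,x_n) of T_n is represented by a function x :: nat => real,
  of which only the values x 1, ..., x n matter (1-based indexing as in the paper).\<close>

definition toep :: "(nat \<Rightarrow> real) \<Rightarrow> nat \<Rightarrow> nat \<Rightarrow> real" where
  "toep x i j = (if i \<le> j then x (j - i + 1) else 0)"

definition tinv :: "nat \<Rightarrow> (nat \<Rightarrow> real) \<Rightarrow> nat \<Rightarrow> real" where
  "tinv n x = (THE y. (\<forall>p. p \<notin> {1..n} \<longrightarrow> y p = 0) \<and>
      (\<forall>i\<in>{1..n}. \<forall>j\<in>{1..n}.
         (\<Sum>l=1..n. toep x i l * toep y l j) = (if i = j then 1 else 0)))"

end

theory Submission
  imports Defs "HOL-Computational_Algebra.Formal_Power_Series"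
begin

definition cA :: "nat \<Rightarrow> (nat \<Rightarrow> real) \<Rightarrow> real fps" where
  "cA n x = Abs_fps (\<lambda>i. if i < n then x (i+1) else 0)"

lemma sum_toep:
  assumes "i \<in> {1..n}" "jj \<in> {1..n}"
  shows "(\<Sum>l=1..n. toep x i l * toep y l jj) = (if i \<le> jj then fps_nth (cA n x * cA n y) (jj - i) else 0)"
proof (cases "i \<le> jj")
  case False
  then show ?thesis by (auto simp: toep_def intro!: sum.neutral)
next
  case True
  have "(\<Sum>l=1..n. toep x i l * toep y l jj) = (\<Sum>l=1..n. if l \<in> {i..jj} then x (l-i+1) * y (jj-l+1) else 0)"
    by (rule sum.cong) (auto simp: toep_def)
  also have "\<dots> = (\<Sum>l\<in>{i..jj}. x (l-i+1) * y (jj-l+1))"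
    using assms by (subst sum.If_cases) (auto intro!: sum.cong simp: Int_absorb1)
  also have "\<dots> = (\<Sum>q=0..jj-i. x (q+i-i+1) * y (jj-(q+i)+1))"
    using sum.shift_bounds_cl_nat_ivl[of "\<lambda>l. x (l-i+1) * y (jj-l+1)" 0 i "jj-i"] True by simp
  also have "\<dots> = fps_nth (cA n x * cA n y) (jj - i)"
    unfolding fps_mult_nth cA_def using assms True by (intro sum.cong) (auto simp: add.commute)
  finally show ?thesis using True by simp
qed

lemma mult_nth_local:
  assumes "\<And>q. q \<le> m \<Longrightarrow> fps_nth g q = fps_nth h q"
  shows "fps_nth (f * g) m = fps_nth (f * h) m"
  unfolding fps_mult_nth using assms by (intro sum.cong) auto

lemma tinv_eq:
  assumes "x 1 \<noteq> 0" "n > 0" "p \<in> {1..n}"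
  shows "tinv n x p = fps_nth (inverse (cA n x)) (p - 1)"
proof -
  define G where "G = inverse (cA n x)"
  define y where "y = (\<lambda>p. if p \<in> {1..n} then fps_nth G (p - 1) else 0)"
  have c0: "fps_nth (cA n x) 0 \<noteq> 0" using assms by (simp add: cA_def)
  have GA: "cA n x * G = 1" unfolding G_def using c0 by (rule inverse_mult_eq_1')
  have AG: "G * cA n x = 1" unfolding G_def using c0 by (rule inverse_mult_eq_1)
  let ?P = "\<lambda>y. (\<forall>p. p \<notin> {1..n} \<longrightarrow> y p = 0) \<and>
      (\<forall>i\<in>{1..n}. \<forall>j\<in>{1..n}.
         (\<Sum>l=1..n. toep x i l * toep y l j) = (if i = j then 1 else 0))"
  have Py: "?P y"
  proof (intro conjI ballI allI impI)
    fix p assume "p \<notin> {1..n}" then show "y p = 0" by (auto simp: y_def)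
  next
    fix i j assume ij: "i \<in> {1..n}" "j \<in> {1..n}"
    have "fps_nth (cA n x * cA n y) (j - i) = fps_nth (cA n x * G) (j - i)"
      using ij by (intro mult_nth_local) (auto simp: cA_def y_def)
    then show "(\<Sum>l=1..n. toep x i l * toep y l j) = (if i = j then 1 else 0)"
      using ij by (subst sum_toep[OF ij]) (auto simp: GA)
  qed
  have uniq: "y' = y" if Py': "?P y'" for y'
  proof
    fix p
    show "y' p = y p"
    proof (cases "p \<in> {1..n}")
      case False then show ?thesis using Py' by (auto simp: y_def)
    next
      case True
      define E where "E = cA n x * cA n y'"
      have E: "fps_nth E r = (if r = 0 then 1 else 0)" if "r < n" for r
        using Py' that sum_toep[of 1 n "r+1" x y'] by (auto simp: E_def)
      have "fps_nth (cA n y') (p-1) = fps_nth (G * E) (p - 1)"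
        by (simp add: E_def AG flip: mult.assoc)
      also have "\<dots> = fps_nth (G * 1) (p - 1)"
        using True by (intro mult_nth_local) (auto simp: E)
      finally show ?thesis using True by (cases p) (auto simp: y_def cA_def)
    qed
  qed
  have "tinv n x = y"
    unfolding tinv_def by (rule the_equality) (use Py uniq in blast)+
  then show ?thesis using assms by (simp add: y_def G_def)
qed


lemma coeff_cont: "isCont (\<lambda>t. fps_nth (cA n (x(j:=t))) i) a"
proof -
  have "(\<lambda>t. fps_nth (cA n (x(j:=t))) i) = (\<lambda>t. if i < n \<and> i + 1 = j then t else if i < n then x (i+1) else 0)"
    by (auto simp: cA_def)
  then show ?thesis by (cases "i < n \<and> i + 1 = j") auto
qed

lemma cont_inv:
  assumes "x 1 \<noteq> 0" "n > 0"
  shows "isCont (\<lambda>t. fps_nth (inverse (cA n (x(j:=t)))) m) (x j)"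
proof (induction m rule: less_induct)
  case (less m)
  have c0: "fps_nth (cA n (x(j:=x j))) 0 \<noteq> 0" using assms by (simp add: cA_def)
  show ?case
  proof (cases m)
    case 0
    then show ?thesis using c0
      unfolding fps_inverse_def fps_nth_Abs_fps 0 fps_right_inverse_constructor.simps(1)
      by (intro continuous_intros coeff_cont) simp
  next
    case (Suc m')
    have e: "(\<lambda>t. fps_nth (inverse (cA n (x(j:=t)))) m) =
      (\<lambda>t. - inverse (fps_nth (cA n (x(j:=t))) 0) * (\<Sum>i=1..m. fps_nth (cA n (x(j:=t))) i * fps_nth (inverse (cA n (x(j:=t)))) (m - i)))"
      by (simp add: fps_inverse_def Suc)
    have "isCont (\<lambda>t. fps_nth (inverse (cA n (x(j:=t)))) (m - i)) (x j)" if "i \<in> {1..m}" for i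
      using that Suc by (intro less) auto
    then show ?thesis unfolding e using c0
      by (intro continuous_intros coeff_cont) auto
  qed
qed


lemma ring_aux: "(b::'a::comm_ring_1) * (- (c * xx)) * g = - (c * (b * (xx * g)))"
  by (simp add: algebra_simps)

lemma deriv_main:
  assumes x1: "x 1 \<noteq> 0" and n: "n > 0" and j: "1 \<le> j" "j \<le> n" and k: "1 \<le> k" "k \<le> n"
  shows "((\<lambda>t. tinv n (x(j:=t)) k) has_real_derivative
          - fps_nth (inverse (cA n x) * inverse (cA n x) * fps_X^(j-1)) (k-1)) (at (x j))"
proof -
  define G where "G = inverse (cA n x)"
  define A where "A = (\<lambda>t. cA n (x(j:=t)))"
  define B where "B = (\<lambda>t. inverse (A t))"
  define g where "g = (\<lambda>t. - fps_nth (B t * (fps_X^(j-1) * G)) (k-1))"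
  define S where "S = {t. (x(j:=t)) 1 \<noteq> 0}"
  have A_eq: "A t = cA n x + fps_const (t - x j) * fps_X^(j-1)" for t
    using j by (intro fps_ext) (auto simp: A_def cA_def)
  have GA: "cA n x * G = 1" unfolding G_def using x1 n by (intro inverse_mult_eq_1') (simp add: cA_def)
  have BA: "B t * A t = 1" if "t \<in> S" for t
    unfolding B_def using that n by (intro inverse_mult_eq_1) (simp add: cA_def A_def S_def)
  have key: "fps_nth (B t) (k-1) - fps_nth G (k-1) = g t * (t - x j)" if "t \<in> S" for t
  proof -
    have "B t * (cA n x - A t) * G = B t * (cA n x * G) - (B t * A t) * G"
      by (simp add: right_diff_distrib left_diff_distrib mult.assoc)
    then have "B t - G = B t * (cA n x - A t) * G"
      using BA[OF that] GA by simp
    also have "cA n x - A t = - (fps_const (t - x j) * fps_X^(j-1))"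
      by (simp add: A_eq)
    also have "B t * (- (fps_const (t - x j) * fps_X^(j-1))) * G = - (fps_const (t - x j) * (B t * (fps_X^(j-1) * G)))"
      by (rule ring_aux)
    finally have "fps_nth (B t - G) (k-1) = fps_nth (- (fps_const (t - x j) * (B t * (fps_X^(j-1) * G)))) (k-1)"
      by simp
    then show ?thesis by (simp add: g_def)
  qed
  have gc: "isCont g (x j)"
  proof -
    have e: "g = (\<lambda>t. - (\<Sum>i=0..k-1. fps_nth (B t) i * fps_nth (fps_X^(j-1) * G) (k-1-i)))"
      by (simp add: g_def fps_mult_nth)
    show ?thesis unfolding e B_def A_def
      by (intro continuous_intros cont_inv[of x n j, OF x1 n])
  qed
  define f2 where "f2 = (\<lambda>t. fps_nth G (k-1) + g t * (t - x j))"
  have "(f2 has_real_derivative g (x j)) (at (x j))"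
    using gc by (subst CARAT_DERIV) (auto simp: f2_def)
  moreover have "g (x j) = - fps_nth (G * G * fps_X^(j-1)) (k-1)"
    by (simp add: g_def B_def A_def G_def mult_ac)
  moreover have "open S"
    unfolding S_def by (cases "j = 1") (auto simp: open_Collect_neq)
  moreover have "x j \<in> S" using x1 by (auto simp: S_def)
  moreover have "f2 t = tinv n (x(j:=t)) k" if "t \<in> S" for t
  proof -
    have "tinv n (x(j:=t)) k = fps_nth (B t) (k-1)"
      using that n k by (subst tinv_eq) (auto simp: S_def B_def A_def)
    then show ?thesis using key[OF that] by (simp add: f2_def)
  qed
  ultimately show ?thesis
    unfolding G_def using has_field_derivative_transform_within_open[of f2 "g (x j)" "x j" S] by simp
qed


theorem lemma10p3:
  fixes n :: nat and x :: "nat \<Rightarrow> real" and j k :: nat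
  assumes "n > 1" and "x 1 \<noteq> 0"
    and "k \<le> n" and "1 \<le> j" and "j < k"
  shows "\<exists>D. ((\<lambda>t. tinv n (x(j := t)) k) has_real_derivative D) (at (x j)) \<and>
             ((\<lambda>t. tinv n (x(1 := t)) (k - j + 1)) has_real_derivative D) (at (x 1))"
proof -
  define G where "G = inverse (cA n x)"
  have d1: "((\<lambda>t. tinv n (x(j := t)) k) has_real_derivative - fps_nth (G * G * fps_X^(j-1)) (k-1)) (at (x j))"
    unfolding G_def using assms by (intro deriv_main) auto
  have d2: "((\<lambda>t. tinv n (x(1 := t)) (k - j + 1)) has_real_derivative - fps_nth (G * G * fps_X^(1-1)) (k - j + 1 - 1)) (at (x 1))"
    unfolding G_def using assms by (intro deriv_main) auto
  have "fps_nth (G * G * fps_X^(j-1)) (k-1) = fps_nth (G * G * fps_X^(1-1)) (k - j + 1 - 1)"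
    using assms by (simp add: fps_X_power_mult_right_nth)
  then show ?thesis using d1 d2 by metis
qed

end
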